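(* Let $G_1$ and $G_2$ be connected graphs, where $G_1$ has at least two vertices. Then $$\chi_d^t(G_1\star G_2)\leq \chi_d^t(G_1)+|V(G_2)|.$$
   Context: All graphs are simple and finite. A total dominator coloring (TD-coloring) of a graph $G$ with no isolated vertex is a proper vertex coloring of $G$ in which every vertex of $G$ is adjacent to every vertex of some color class (a color class being the set of all vertices receiving a given color). The total dominator chromatic number (TDC-number) $\chi_d^t(G)$ is the minimum number of colors in a TD-coloring of $G$. The neighbourhood corona $G_1\star G_2$ of graphs $G_1$ and $G_2$ is the graph obtained by taking one copy of $G_1$ and $|V(G_1)|$ copies of $G_2$, and, for each $i$, joining every neighbour (in $G_1$) of the $i$-th vertex of $G_1$ to every vertex of the $i$-th copy of $G_2$. *)

theory Defs
  imports Main
begin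

definition simple_graph :: "'a set \<Rightarrow> ('a \<Rightarrow> 'a \<Rightarrow> bool) \<Rightarrow> bool" where
  "simple_graph V E \<longleftrightarrow> finite V \<and>
     (\<forall>x y. E x y \<longrightarrow> x \<in> V \<and> y \<in> V \<and> x \<noteq> y \<and> E y x)"

definition connected_graph :: "'a set \<Rightarrow> ('a \<Rightarrow> 'a \<Rightarrow> bool) \<Rightarrow> bool" where
  "connected_graph V E \<longleftrightarrow> V \<noteq> {} \<and> (\<forall>x\<in>V. \<forall>y\<in>V. E\<^sup>*\<^sup>* x y)"

definition td_coloring :: "'a set \<Rightarrow> ('a \<Rightarrow> 'a \<Rightarrow> bool) \<Rightarrow> ('a \<Rightarrow> nat) \<Rightarrow> bool" where
  "td_coloring V E c \<longleftrightarrow>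
     (\<forall>x\<in>V. \<forall>y\<in>V. E x y \<longrightarrow> c x \<noteq> c y) \<and>
     (\<forall>v\<in>V. \<exists>k\<in>c ` V. \<forall>u\<in>V. c u = k \<longrightarrow> E v u)"

definition tdc_number :: "'a set \<Rightarrow> ('a \<Rightarrow> 'a \<Rightarrow> bool) \<Rightarrow> nat" where
  "tdc_number V E = (LEAST n. \<exists>c. td_coloring V E c \<and> card (c ` V) = n)"

text \<open>Neighbourhood corona G1 \<star> G2: vertices Inl i (copy of G1) and Inr (i, x)
  (vertex x of the i-th copy of G2); every neighbour of i in G1 is joined to
  every vertex of the i-th copy of G2.\<close>
definition ncorona_V :: "'a set \<Rightarrow> 'b set \<Rightarrow> ('a + 'a \<times> 'b) set" where
  "ncorona_V V1 V2 = Inl ` V1 \<union> Inr ` (V1 \<times> V2)"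

fun ncorona_E :: "('a \<Rightarrow> 'a \<Rightarrow> bool) \<Rightarrow> ('b \<Rightarrow> 'b \<Rightarrow> bool)
    \<Rightarrow> ('a + 'a \<times> 'b) \<Rightarrow> ('a + 'a \<times> 'b) \<Rightarrow> bool" where
  "ncorona_E E1 E2 (Inl i) (Inl j) = E1 i j"
| "ncorona_E E1 E2 (Inr (i, x)) (Inr (j, y)) = (i = j \<and> E2 x y)"
| "ncorona_E E1 E2 (Inl j) (Inr (i, x)) = E1 j i"
| "ncorona_E E1 E2 (Inr (i, x)) (Inl j) = E1 j i"

end

theory Submission
  imports Defs
begin

theorem theorem2:
  fixes V1 :: "'a set" and E1 :: "'a \<Rightarrow> 'a \<Rightarrow> bool"
    and V2 :: "'b set" and E2 :: "'b \<Rightarrow> 'b \<Rightarrow> bool"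
  assumes "simple_graph V1 E1" and "connected_graph V1 E1" and "card V1 \<ge> 2"
    and "simple_graph V2 E2" and "connected_graph V2 E2"
  shows "tdc_number (ncorona_V V1 V2) (ncorona_E E1 E2)
           \<le> tdc_number V1 E1 + card V2"
proof -
  have fin1: "finite V1" and sym1: "\<And>x y. E1 x y \<Longrightarrow> x \<in> V1 \<and> y \<in> V1 \<and> x \<noteq> y \<and> E1 y x"
    using assms(1) unfolding simple_graph_def by auto
  have fin2: "finite V2" and sym2: "\<And>x y. E2 x y \<Longrightarrow> x \<in> V2 \<and> y \<in> V2 \<and> x \<noteq> y \<and> E2 y x"
    using assms(4) unfolding simple_graph_def by auto
  have conn: "\<And>x y. x \<in> V1 \<Longrightarrow> y \<in> V1 \<Longrightarrow> E1\<^sup>*\<^sup>* x y"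
    using assms(2) unfolding connected_graph_def by auto
  have nbr: "\<exists>u. E1 v u" if v: "v \<in> V1" for v
  proof -
    have "\<exists>w\<in>V1. w \<noteq> v"
    proof (rule ccontr)
      assume "\<not> ?thesis"
      then have "V1 \<subseteq> {v}" by auto
      then have "card V1 \<le> 1" using card_mono[of "{v}" V1] by auto
      with assms(3) show False by simp
    qed
    then obtain w where w: "w \<in> V1" "w \<noteq> v" by auto
    have "E1\<^sup>*\<^sup>* v w" using conn v w by auto
    then show ?thesis using w(2) by (cases rule: converse_rtranclpE) auto
  qed
  obtain f :: "'a \<Rightarrow> nat" and n where f: "inj_on f V1"
    using finite_imp_inj_to_nat_seg[OF fin1] by blast
  have "td_coloring V1 E1 f"
    unfolding td_coloring_def
  proof (intro conjI ballI impI)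
    fix x y assume "x \<in> V1" "y \<in> V1" "E1 x y"
    then show "f x \<noteq> f y" using f sym1 by (metis inj_onD)
  next
    fix v assume v: "v \<in> V1"
    then obtain u where u: "E1 v u" using nbr by blast
    then have uV: "u \<in> V1" using sym1 by blast
    show "\<exists>k\<in>f ` V1. \<forall>u'\<in>V1. f u' = k \<longrightarrow> E1 v u'"
      using u uV f by (intro bexI[of _ "f u"]) (auto dest: inj_onD)
  qed
  then have "\<exists>n c. td_coloring V1 E1 c \<and> card (c ` V1) = n" by blast
  then have "\<exists>c. td_coloring V1 E1 c \<and> card (c ` V1) = tdc_number V1 E1"
    unfolding tdc_number_def by (rule LeastI_ex[where P="\<lambda>n. \<exists>c. td_coloring V1 E1 c \<and> card (c ` V1) = n", simplified ex_comm[of "\<lambda>n c. _"]]) 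
  then obtain c where c: "td_coloring V1 E1 c" and cc: "card (c ` V1) = tdc_number V1 E1" by blast
  obtain g :: "'b \<Rightarrow> nat" and m where g: "inj_on g V2"
    using finite_imp_inj_to_nat_seg[OF fin2] by blast
  define M where "M = Suc (Max (c ` V1))"
  have cM: "c v < M" if "v \<in> V1" for v
    unfolding M_def using fin1 that by (simp add: le_imp_less_Suc)
  define d :: "'a + 'a \<times> 'b \<Rightarrow> nat" where
    "d = case_sum c (\<lambda>(i, x). M + g x)"
  have dl[simp]: "d (Inl v) = c v" for v unfolding d_def by simp
  have dr[simp]: "d (Inr (i, x)) = M + g x" for i x unfolding d_def by simp
  let ?V = "ncorona_V V1 V2" and ?E = "ncorona_E E1 E2"
  have cprop: "\<And>x y. x\<in>V1 \<Longrightarrow> y\<in>V1 \<Longrightarrow> E1 x y \<Longrightarrow> c x \<noteq> c y"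
    and cdom: "\<And>v. v\<in>V1 \<Longrightarrow> \<exists>k\<in>c ` V1. \<forall>u\<in>V1. c u = k \<longrightarrow> E1 v u"
    using c unfolding td_coloring_def by auto
  have clsI: "\<exists>k\<in>d ` ?V. \<forall>u\<in>?V. d u = k \<longrightarrow> ?E w u"
    if a: "a \<in> V1" and wa: "\<And>u. E1 a u \<Longrightarrow> ?E w (Inl u)" for a w
  proof -
    obtain k where k: "k \<in> c ` V1" and hk: "\<forall>u\<in>V1. c u = k \<longrightarrow> E1 a u"
      using cdom[OF a] by blast
    obtain u0 where u0: "u0 \<in> V1" "k = c u0" using k by blast
    have "k \<in> d ` ?V" using u0 unfolding ncorona_V_def
      by (intro image_eqI[of _ _ "Inl u0"]) auto
    moreover have "\<forall>u\<in>?V. d u = k \<longrightarrow> ?E w u"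
    proof (intro ballI impI)
      fix u assume uV: "u \<in> ?V" and du: "d u = k"
      show "?E w u"
      proof (cases u)
        case (Inl b) then show ?thesis using uV du hk wa unfolding ncorona_V_def by auto
      next
        case (Inr p)
        then obtain i x where "u = Inr (i, x)" by (cases p) auto
        then have "M + g x = c u0" using du u0 by simp
        then show ?thesis using cM[OF u0(1)] by simp
      qed
    qed
    ultimately show ?thesis by blast
  qed
  have td: "td_coloring ?V ?E d"
    unfolding td_coloring_def
  proof (intro conjI ballI impI)
    fix x y assume xV: "x \<in> ?V" and yV: "y \<in> ?V" and e: "?E x y"
    show "d x \<noteq> d y"
    proof (cases x)
      case (Inl a)
      show ?thesis
      proof (cases y)
        case (Inl b) then show ?thesis using Inl \<open>x = Inl a\<close> e xV yV cprop
          unfolding ncorona_V_def by auto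
      next
        case (Inr p) then obtain i z where "y = Inr (i, z)" by (cases p) auto
        then show ?thesis using Inl xV cM unfolding ncorona_V_def by fastforce
      qed
    next
      case (Inr p) then obtain i z where xi: "x = Inr (i, z)" by (cases p) auto
      show ?thesis
      proof (cases y)
        case (Inl b) then show ?thesis using xi yV cM unfolding ncorona_V_def by fastforce
      next
        case (Inr q) then obtain j t where yj: "y = Inr (j, t)" by (cases q) auto
        then have "E2 z t" using e xi by simp
        then have "z \<in> V2" "t \<in> V2" "z \<noteq> t" using sym2 by auto
        then show ?thesis using xi yj g by (auto dest: inj_onD)
      qed
    qed
  next
    fix v assume vV: "v \<in> ?V"
    show "\<exists>k\<in>d ` ?V. \<forall>u\<in>?V. d u = k \<longrightarrow> ?E v u"
    proof (cases v)
      case (Inl a)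
      then have "a \<in> V1" using vV unfolding ncorona_V_def by auto
      then show ?thesis using Inl by (intro clsI) auto
    next
      case (Inr p) then obtain i z where vi: "v = Inr (i, z)" by (cases p) auto
      then have "i \<in> V1" using vV unfolding ncorona_V_def by auto
      then show ?thesis using vi sym1 by (intro clsI) auto
    qed
  qed
  have sub: "d ` ?V \<subseteq> c ` V1 \<union> (\<lambda>x. M + g x) ` V2"
    unfolding ncorona_V_def by auto
  have "card (d ` ?V) \<le> card (c ` V1 \<union> (\<lambda>x. M + g x) ` V2)"
    using sub fin1 fin2 by (intro card_mono) auto
  also have "\<dots> \<le> card (c ` V1) + card ((\<lambda>x. M + g x) ` V2)" by (rule card_Un_le)
  also have "\<dots> \<le> tdc_number V1 E1 + card V2" using cc card_image_le[OF fin2] by simp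
  finally have le: "card (d ` ?V) \<le> tdc_number V1 E1 + card V2" .
  have "tdc_number ?V ?E \<le> card (d ` ?V)"
    unfolding tdc_number_def using td by (intro Least_le) blast
  with le show ?thesis by simp
qed

end
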